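(* Let $n\ge1$, $k\in[n-1]$, $u,w\in S_n$, and $w_{0,n}=[n,n-1,\dots,1]$. Then $u\xrightarrow[k]{}w$ if and only if $w\,w_{0,n}\xrightarrow{n-k}u\,w_{0,n}$.
   Context: $S_n$ is the symmetric group on $[n]$, with $uv=u\circ v$; $\tau_{i,j}$ is the transposition of $i<j$; $\ell(u)$ is the number of inversions. For $k$, $u\lessdot_k u\tau_{i,j}$ means $i\le k<j$ and $\ell(u\tau_{i,j})=\ell(u)+1$. $u\xrightarrow{k}w$ means there is a chain $u=u_1\lessdot_k\cdots\lessdot_k u_s=w$ ($s\ge1$), $u_{t+1}=u_t\tau_{a_t,b_t}$, with $u_1(a_1)<u_2(a_2)<\cdots<u_{s-1}(a_{s-1})$; equivalently (Sottile) such a chain with $b_1,\dots,b_{s-1}$ pairwise distinct. $u\xrightarrow[k]{}w$ means there is a chain $u=u_1\lessdot_k\cdots\lessdot_k u_s=w$ with $u_{t+1}=u_t\tau_{a_t,b_t}$ and $a_1,\dots,a_{s-1}$ pairwise distinct. *)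

theory Defs
  imports "HOL-Combinatorics.Combinatorics"
begin

text \<open>Permutations of [n] = {1..n} are functions nat => nat with u permutes {1..n}.
  Multiplication is composition (uv = u o v); tau_{i,j} is transpose i j.\<close>

definition inversions :: "nat \<Rightarrow> (nat \<Rightarrow> nat) \<Rightarrow> nat" where
  "inversions n u = card {(i, j). 1 \<le> i \<and> i < j \<and> j \<le> n \<and> u j < u i}"

definition kcover :: "nat \<Rightarrow> nat \<Rightarrow> (nat \<Rightarrow> nat) \<Rightarrow> nat \<Rightarrow> nat \<Rightarrow> bool" where
  "kcover n k u a b \<longleftrightarrow> 1 \<le> a \<and> a \<le> k \<and> k < b \<and> b \<le> n \<and>
     inversions n (u \<circ> transpose a b) = inversions n u + 1"

text \<open>A chain starting at u is given by the list of transpositions (a_t, b_t).\<close>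
fun chain_end :: "(nat \<Rightarrow> nat) \<Rightarrow> (nat \<times> nat) list \<Rightarrow> (nat \<Rightarrow> nat)" where
  "chain_end u [] = u"
| "chain_end u ((a, b) # ps) = chain_end (u \<circ> transpose a b) ps"

fun kchain :: "nat \<Rightarrow> nat \<Rightarrow> (nat \<Rightarrow> nat) \<Rightarrow> (nat \<times> nat) list \<Rightarrow> bool" where
  "kchain n k u [] = True"
| "kchain n k u ((a, b) # ps) = (kcover n k u a b \<and> kchain n k (u \<circ> transpose a b) ps)"

fun chain_vals :: "(nat \<Rightarrow> nat) \<Rightarrow> (nat \<times> nat) list \<Rightarrow> nat list" where
  "chain_vals u [] = []"
| "chain_vals u ((a, b) # ps) = u a # chain_vals (u \<circ> transpose a b) ps"

definition upper_arrow :: "nat \<Rightarrow> nat \<Rightarrow> (nat \<Rightarrow> nat) \<Rightarrow> (nat \<Rightarrow> nat) \<Rightarrow> bool" where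
  "upper_arrow n k u w \<longleftrightarrow> (\<exists>ps. kchain n k u ps \<and> chain_end u ps = w \<and>
       sorted_wrt (<) (chain_vals u ps))"

definition lower_arrow :: "nat \<Rightarrow> nat \<Rightarrow> (nat \<Rightarrow> nat) \<Rightarrow> (nat \<Rightarrow> nat) \<Rightarrow> bool" where
  "lower_arrow n k u w \<longleftrightarrow> (\<exists>ps. kchain n k u ps \<and> chain_end u ps = w \<and>
       distinct (map fst ps))"

definition w0 :: "nat \<Rightarrow> nat \<Rightarrow> nat" where
  "w0 n i = (if 1 \<le> i \<and> i \<le> n then n + 1 - i else i)"

end

theory Submission imports Defs begin

definition Sinv :: "nat \<Rightarrow> (nat \<Rightarrow> nat) \<Rightarrow> (nat \<times> nat) set" where
  "Sinv n v = {(i, j). 1 \<le> i \<and> i < j \<and> j \<le> n \<and> v j < v i}"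

lemma inv_Sinv: "inversions n v = card (Sinv n v)"
  by (simp add: inversions_def Sinv_def)

lemma fin_Sinv: "finite (Sinv n v)"
proof -
  have "Sinv n v \<subseteq> {1..n} \<times> {1..n}" by (auto simp: Sinv_def)
  then show ?thesis using finite_subset by blast
qed

lemma C1:
  fixes v :: "nat \<Rightarrow> nat"
  assumes inj: "inj v" and ab: "1 \<le> a" "a < b" "b \<le> n" and lt: "v a < v b"
  shows "inversions n (v \<circ> transpose a b) = inversions n v + 1 +
     2 * card {c. a < c \<and> c < b \<and> v a < v c \<and> v c < v b}"
proof -
  define t where "t = transpose a b"
  define G where "G = {(i::nat, j::nat). t i < t j}"
  define L where "L = {c. a < c \<and> c < b \<and> v c < v a}"
  define M where "M = {c. a < c \<and> c < b \<and> v a < v c \<and> v c < v b}"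
  define H where "H = {c. a < c \<and> c < b \<and> v b < v c}"
  have fL: "finite L" "finite M" "finite H" by (auto simp: L_def M_def H_def)
  have tt: "t (t x) = x" for x by (simp add: t_def)
  have trange: "1 \<le> x \<Longrightarrow> x \<le> n \<Longrightarrow> 1 \<le> t x \<and> t x \<le> n" for x
    using ab by (auto simp: t_def transpose_def)
  define h where "h = (\<lambda>(i::nat, j::nat). (t i, t j))"
  have injh: "inj h" unfolding h_def inj_def using tt by (auto, metis)+
  have himg: "h ` (Sinv n (v \<circ> t) \<inter> G) = Sinv n v \<inter> G"
  proof
    show "h ` (Sinv n (v \<circ> t) \<inter> G) \<subseteq> Sinv n v \<inter> G"
      using trange tt by (auto simp: h_def Sinv_def G_def)
  next
    show "Sinv n v \<inter> G \<subseteq> h ` (Sinv n (v \<circ> t) \<inter> G)"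
    proof
      fix p assume p: "p \<in> Sinv n v \<inter> G"
      obtain i j where pij: "p = (i, j)" by force
      have "(t i, t j) \<in> Sinv n (v \<circ> t) \<inter> G" "p = h (t i, t j)"
        using p trange tt by (auto simp: h_def Sinv_def G_def pij)
      then show "p \<in> h ` (Sinv n (v \<circ> t) \<inter> G)" by blast
    qed
  qed
  have cardG: "card (Sinv n (v \<circ> t) \<inter> G) = card (Sinv n v \<inter> G)"
    using himg injh card_image by (metis inj_on_subset subset_UNIV)
  have D1: "Sinv n (v \<circ> t) - G = {(a, b)} \<union> (\<lambda>c. (a, c)) ` (L \<union> M) \<union> (\<lambda>c. (c, b)) ` (M \<union> H)"
  proof
    show "Sinv n (v \<circ> t) - G \<subseteq> {(a, b)} \<union> (\<lambda>c. (a, c)) ` (L \<union> M) \<union> (\<lambda>c. (c, b)) ` (M \<union> H)"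
    proof
      fix p assume p: "p \<in> Sinv n (v \<circ> t) - G"
      obtain i j where pij: "p = (i, j)" by force
      have ij: "1 \<le> i" "i < j" "j \<le> n" "v (t j) < v (t i)" "\<not> t i < t j"
        using p by (auto simp: Sinv_def G_def pij)
      show "p \<in> {(a, b)} \<union> (\<lambda>c. (a, c)) ` (L \<union> M) \<union> (\<lambda>c. (c, b)) ` (M \<union> H)"
      proof (cases "i = a")
        case True
        show ?thesis
        proof (cases "j = b")
          case True then show ?thesis using \<open>i = a\<close> pij by simp
        next
          case False
          then have "t j = j" "t i = b" using ij \<open>i = a\<close> by (auto simp: t_def)
          then have "j < b" "v j < v b" using ij False by auto
          moreover have "v j \<noteq> v a" using inj \<open>i = a\<close> ij inj_eq by fastforce
          ultimately have "j \<in> L \<union> M" using ij \<open>i = a\<close> by (auto simp: L_def M_def)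
          then show ?thesis using pij \<open>i = a\<close> by blast
        qed
      next
        case False
        have "i \<noteq> b"
        proof
          assume "i = b"
          then have "j \<noteq> a" "j \<noteq> b" using ij ab by auto
          then have "t i = a" "t j = j" using \<open>i = b\<close> by (auto simp: t_def)
          then show False using ij ab \<open>i = b\<close> by auto
        qed
        then have ti: "t i = i" using False by (simp add: t_def)
        have "j = b"
        proof (rule ccontr)
          assume "j \<noteq> b"
          moreover have "j \<noteq> a \<or> t j = b" by (auto simp: t_def)
          ultimately show False using ij ti ab by (cases "j = a") (auto simp: t_def)
        qed
        then have "t j = a" by (simp add: t_def)
        then have "a < i" "i < b" "v a < v i" using ij ti False \<open>j = b\<close> by auto
        moreover have "v i \<noteq> v b" using inj \<open>i \<noteq> b\<close> inj_eq by fastforce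
        ultimately have "i \<in> M \<union> H" by (auto simp: M_def H_def)
        then show ?thesis using pij \<open>j = b\<close> by blast
      qed
    qed
  next
    show "{(a, b)} \<union> (\<lambda>c. (a, c)) ` (L \<union> M) \<union> (\<lambda>c. (c, b)) ` (M \<union> H) \<subseteq> Sinv n (v \<circ> t) - G"
      using ab lt by (auto simp: Sinv_def G_def L_def M_def H_def t_def)
  qed
  have D2: "Sinv n v - G = (\<lambda>c. (a, c)) ` L \<union> (\<lambda>c. (c, b)) ` H"
  proof
    show "Sinv n v - G \<subseteq> (\<lambda>c. (a, c)) ` L \<union> (\<lambda>c. (c, b)) ` H"
    proof
      fix p assume p: "p \<in> Sinv n v - G"
      obtain i j where pij: "p = (i, j)" by force
      have ij: "1 \<le> i" "i < j" "j \<le> n" "v j < v i" "\<not> t i < t j"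
        using p by (auto simp: Sinv_def G_def pij)
      show "p \<in> (\<lambda>c. (a, c)) ` L \<union> (\<lambda>c. (c, b)) ` H"
      proof (cases "i = a")
        case True
        then have "j \<noteq> b" using ij lt by auto
        then have "t j = j" "t i = b" using ij \<open>i = a\<close> by (auto simp: t_def)
        then have "j < b" using ij \<open>j \<noteq> b\<close> by auto
        then have "j \<in> L" using ij \<open>i = a\<close> by (auto simp: L_def)
        then show ?thesis using pij \<open>i = a\<close> by blast
      next
        case False
        have "i \<noteq> b"
        proof
          assume "i = b"
          then have "j \<noteq> a" "j \<noteq> b" using ij ab by auto
          then have "t i = a" "t j = j" using \<open>i = b\<close> by (auto simp: t_def)
          then show False using ij ab \<open>i = b\<close> by auto
        qed
        then have ti: "t i = i" using False by (simp add: t_def)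
        have "j = b"
        proof (rule ccontr)
          assume "j \<noteq> b"
          moreover have "j \<noteq> a \<or> t j = b" by (auto simp: t_def)
          ultimately show False using ij ti ab by (cases "j = a") (auto simp: t_def)
        qed
        then have "t j = a" by (simp add: t_def)
        then have "a < i" "i < b" using ij ti False \<open>j = b\<close> by auto
        then have "i \<in> H" using ij \<open>j = b\<close> by (auto simp: H_def)
        then show ?thesis using pij \<open>j = b\<close> by blast
      qed
    qed
  next
    show "(\<lambda>c. (a, c)) ` L \<union> (\<lambda>c. (c, b)) ` H \<subseteq> Sinv n v - G"
      using ab lt by (auto simp: Sinv_def G_def L_def H_def t_def)
  qed
  have disj: "L \<inter> M = {}" "M \<inter> H = {}" "L \<inter> H = {}" using lt by (auto simp: L_def M_def H_def)
  have i1: "inj (\<lambda>c::nat. (a, c))" "inj (\<lambda>c::nat. (c, b))" by (auto simp: inj_def)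
  have c1: "card (Sinv n (v \<circ> t) - G) = 1 + (card L + card M) + (card M + card H)"
  proof -
    have e1: "(a, b) \<notin> (\<lambda>c. (a, c)) ` (L \<union> M)" by (auto simp: L_def M_def)
    have e2: "({(a, b)} \<union> (\<lambda>c. (a, c)) ` (L \<union> M)) \<inter> (\<lambda>c. (c, b)) ` (M \<union> H) = {}"
      by (auto simp: L_def M_def H_def)
    have "card (Sinv n (v \<circ> t) - G) = card ({(a, b)} \<union> (\<lambda>c. (a, c)) ` (L \<union> M)) + card ((\<lambda>c. (c, b)) ` (M \<union> H))"
      unfolding D1 by (rule card_Un_disjoint) (use fL e2 in auto)
    also have "card ({(a, b)} \<union> (\<lambda>c. (a, c)) ` (L \<union> M)) = 1 + card (L \<union> M)"
      using e1 fL card_image[OF inj_on_subset[OF i1(1)]] by simp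
    also have "card ((\<lambda>c. (c, b)) ` (M \<union> H)) = card (M \<union> H)"
      using card_image[OF inj_on_subset[OF i1(2)]] by simp
    finally show ?thesis using fL disj by (simp add: card_Un_disjoint del: comp_apply)
  qed
  have c2: "card (Sinv n v - G) = card L + card H"
  proof -
    have e2: "(\<lambda>c. (a, c)) ` L \<inter> (\<lambda>c. (c, b)) ` H = {}"
      by (auto simp: L_def H_def)
    have "card (Sinv n v - G) = card ((\<lambda>c. (a, c)) ` L) + card ((\<lambda>c. (c, b)) ` H)"
      unfolding D2 by (rule card_Un_disjoint) (use fL e2 in auto)
    then show ?thesis using card_image[OF inj_on_subset[OF i1(1)]] card_image[OF inj_on_subset[OF i1(2)]] by simp
  qed
  have "inversions n (v \<circ> t) = card (Sinv n (v \<circ> t) \<inter> G) + card (Sinv n (v \<circ> t) - G)"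
    by (simp add: inv_Sinv card_Int_Diff[OF fin_Sinv])
  moreover have "inversions n v = card (Sinv n v \<inter> G) + card (Sinv n v - G)"
    by (simp add: inv_Sinv card_Int_Diff[OF fin_Sinv])
  ultimately show ?thesis using cardG c1 c2 by (simp add: t_def M_def)
qed


definition cov :: "nat \<Rightarrow> nat \<Rightarrow> (nat \<Rightarrow> nat) \<Rightarrow> nat \<Rightarrow> nat \<Rightarrow> bool" where
  "cov n k v a b \<longleftrightarrow> 1 \<le> a \<and> a \<le> k \<and> k < b \<and> b \<le> n \<and> v a < v b \<and>
     (\<forall>c. a < c \<and> c < b \<longrightarrow> \<not> (v a < v c \<and> v c < v b))"

lemma C:
  fixes v :: "nat \<Rightarrow> nat"
  assumes inj: "inj v"
  shows "kcover n k v a b \<longleftrightarrow> cov n k v a b"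
proof (cases "1 \<le> a \<and> a \<le> k \<and> k < b \<and> b \<le> n")
  case False then show ?thesis by (auto simp: kcover_def cov_def)
next
  case True
  define M where "M = {c. a < c \<and> c < b \<and> v a < v c \<and> v c < v b}"
  have fM: "finite M" by (auto simp: M_def)
  have ab: "1 \<le> a" "a < b" "b \<le> n" using True by auto
  show ?thesis
  proof (cases "v a < v b")
    case True
    have "inversions n (v \<circ> transpose a b) = inversions n v + 1 + 2 * card M"
      using C1[OF inj ab True] by (simp add: M_def)
    moreover have "card M = 0 \<longleftrightarrow> (\<forall>c. a < c \<and> c < b \<longrightarrow> \<not> (v a < v c \<and> v c < v b))"
      using fM by (auto simp: M_def)
    ultimately show ?thesis using True \<open>1 \<le> a \<and> a \<le> k \<and> k < b \<and> b \<le> n\<close>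
      by (auto simp: kcover_def cov_def)
  next
    case False
    have "v a \<noteq> v b" using inj ab inj_eq by fastforce
    with False have lt: "(v \<circ> transpose a b) a < (v \<circ> transpose a b) b" by simp
    have inj2: "inj (v \<circ> transpose a b)" using inj by (simp add: inj_compose inj_transpose)
    have eq: "inversions n (v \<circ> transpose a b \<circ> transpose a b) = inversions n (v \<circ> transpose a b) + 1 +
     2 * card {c. a < c \<and> c < b \<and> (v \<circ> transpose a b) a < (v \<circ> transpose a b) c \<and> (v \<circ> transpose a b) c < (v \<circ> transpose a b) b}"
      by (rule C1[OF inj2 ab lt])
    have "inversions n (v \<circ> transpose a b \<circ> transpose a b) \<ge> inversions n (v \<circ> transpose a b) + 1"
      unfolding eq by linarith
    then have "inversions n v \<ge> inversions n (v \<circ> transpose a b) + 1"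
      by (simp add: comp_assoc)
    then show ?thesis using False by (auto simp: kcover_def cov_def)
  qed
qed

fun kch :: "nat \<Rightarrow> nat \<Rightarrow> (nat \<Rightarrow> nat) \<Rightarrow> (nat \<times> nat) list \<Rightarrow> bool" where
  "kch n k u [] = True"
| "kch n k u ((a, b) # ps) = (cov n k u a b \<and> kch n k (u \<circ> transpose a b) ps)"

lemma kchain_iff: "inj v \<Longrightarrow> kchain n k v ps \<longleftrightarrow> kch n k v ps"
proof (induction ps arbitrary: v)
  case Nil then show ?case by simp
next
  case (Cons p ps)
  obtain a b where p: "p = (a, b)" by force
  have "inj (v \<circ> transpose a b)" using Cons.prems by (simp add: inj_compose inj_transpose)
  then show ?case using Cons.IH[OF \<open>inj (v \<circ> transpose a b)\<close>] C[OF Cons.prems] p by (simp del: comp_apply)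
qed

lemma kch_append: "kch n k v (xs @ ys) \<longleftrightarrow> kch n k v xs \<and> kch n k (chain_end v xs) ys"
  by (induction xs arbitrary: v) auto

lemma end_append: "chain_end v (xs @ ys) = chain_end (chain_end v xs) ys"
  by (induction xs arbitrary: v) auto

lemma vals_append: "chain_vals v (xs @ ys) = chain_vals v xs @ chain_vals (chain_end v xs) ys"
  by (induction xs arbitrary: v) auto

definition fl :: "nat \<Rightarrow> nat \<times> nat \<Rightarrow> nat \<times> nat" where
  "fl n p = (n + 1 - snd p, n + 1 - fst p)"

lemma w0w0: "w0 n \<circ> w0 n = id"
  by (rule ext) (auto simp: w0_def)

lemma inj_w0: "inj (w0 n)"
  by (metis inj_on_id inj_on_imageI2 w0w0)

lemma tw0t: "1 \<le> a \<Longrightarrow> a < b \<Longrightarrow> b \<le> n \<Longrightarrow>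
   transpose a b \<circ> w0 n \<circ> transpose (n + 1 - b) (n + 1 - a) = w0 n"
  by (rule ext) (auto simp: w0_def transpose_def)

lemma step_rev:
  assumes "cov n k u a b" "k \<le> n"
  shows "cov n (n - k) (u \<circ> transpose a b \<circ> w0 n) (n + 1 - b) (n + 1 - a)"
proof -
  have ab: "1 \<le> a" "a \<le> k" "k < b" "b \<le> n" "u a < u b"
    and nb: "\<And>c. a < c \<Longrightarrow> c < b \<Longrightarrow> \<not> (u a < u c \<and> u c < u b)"
    using assms by (auto simp: cov_def)
  have e1: "(u \<circ> transpose a b \<circ> w0 n) (n + 1 - b) = u a" using ab by (auto simp: w0_def)
  have e2: "(u \<circ> transpose a b \<circ> w0 n) (n + 1 - a) = u b" using ab by (auto simp: w0_def)
  have e3: "(u \<circ> transpose a b \<circ> w0 n) c = u (n + 1 - c)" if "n + 1 - b < c" "c < n + 1 - a" for c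
    using ab that by (auto simp: w0_def transpose_def)
  show ?thesis unfolding cov_def e1 e2
  proof (intro conjI allI impI)
    fix c assume c: "n + 1 - b < c \<and> c < n + 1 - a"
    then have "a < n + 1 - c" "n + 1 - c < b" using ab by auto
    then show "\<not> (u a < (u \<circ> transpose a b \<circ> w0 n) c \<and> (u \<circ> transpose a b \<circ> w0 n) c < u b)"
      using nb e3 c by auto
  qed (use ab assms in auto)
qed

lemma rev_chain:
  assumes "kch n k u ps" "k \<le> n"
  shows "kch n (n - k) (chain_end u ps \<circ> w0 n) (rev (map (fl n) ps)) \<and>
    chain_end (chain_end u ps \<circ> w0 n) (rev (map (fl n) ps)) = u \<circ> w0 n \<and>
    chain_vals (chain_end u ps \<circ> w0 n) (rev (map (fl n) ps)) = rev (chain_vals u ps)"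
  using assms(1)
proof (induction ps arbitrary: u)
  case Nil then show ?case by simp
next
  case (Cons p ps)
  obtain a b where p: "p = (a, b)" by force
  have cv: "cov n k u a b" and kc: "kch n k (u \<circ> transpose a b) ps" using Cons.prems p by auto
  note IH = Cons.IH[OF kc]
  have ab: "1 \<le> a" "a < b" "b \<le> n" using cv by (auto simp: cov_def)
  have st: "cov n (n - k) (u \<circ> transpose a b \<circ> w0 n) (n + 1 - b) (n + 1 - a)"
    using step_rev[OF cv assms(2)] .
  have en: "u \<circ> transpose a b \<circ> w0 n \<circ> transpose (n + 1 - b) (n + 1 - a) = u \<circ> w0 n"
    using tw0t[OF ab] by (simp add: comp_assoc)
  have v1: "(u \<circ> transpose a b \<circ> w0 n) (n + 1 - b) = u a" using ab by (auto simp: w0_def)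
  define X where "X = chain_end u (p # ps) \<circ> w0 n"
  define R where "R = rev (map (fl n) ps)"
  have X: "X = chain_end (u \<circ> transpose a b) ps \<circ> w0 n" using p by (simp add: X_def)
  have IH1: "kch n (n - k) X R" "chain_end X R = u \<circ> transpose a b \<circ> w0 n"
    "chain_vals X R = rev (chain_vals (u \<circ> transpose a b) ps)"
    using IH unfolding X R_def by (auto simp del: comp_apply)
  have R2: "rev (map (fl n) (p # ps)) = R @ [(n + 1 - b, n + 1 - a)]"
    using p by (simp add: R_def fl_def)
  show ?case unfolding X_def[symmetric] R2
    using IH1 st en v1 p by (simp add: kch_append end_append vals_append del: comp_apply)
qed

lemma mono_val:
  assumes "kch n k v ps" "p \<le> k" "p \<in> fst ` set ps"
  shows "\<exists>x\<in>set (chain_vals v ps). v p \<le> x"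
  using assms(1,3)
proof (induction ps arbitrary: v)
  case Nil then show ?case by simp
next
  case (Cons q ps)
  obtain a b where q: "q = (a, b)" by force
  show ?case
  proof (cases "a = p")
    case True then show ?thesis using q by simp
  next
    case False
    then have pin: "p \<in> fst ` set ps" using Cons.prems q by auto
    have "kch n k (v \<circ> transpose a b) ps" "k < b" using Cons.prems q by (auto simp: cov_def)
    from Cons.IH[OF this(1) pin] obtain x where "x \<in> set (chain_vals (v \<circ> transpose a b) ps)"
       "(v \<circ> transpose a b) p \<le> x" by blast
    moreover have "(v \<circ> transpose a b) p = v p" using False \<open>k < b\<close> assms(2) by auto
    ultimately show ?thesis using q by auto
  qed
qed

lemma dec_distinct:
  assumes "kch n k v ps" "sorted_wrt (>) (chain_vals v ps)"
  shows "distinct (map fst ps)"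
  using assms
proof (induction ps arbitrary: v)
  case Nil then show ?case by simp
next
  case (Cons q ps)
  obtain a b where q: "q = (a, b)" by force
  have cv: "cov n k v a b" and kc: "kch n k (v \<circ> transpose a b) ps"
    and so: "\<forall>x\<in>set (chain_vals (v \<circ> transpose a b) ps). x < v a"
    "sorted_wrt (>) (chain_vals (v \<circ> transpose a b) ps)"
    using Cons.prems q by auto
  have "a \<notin> fst ` set ps"
  proof
    assume "a \<in> fst ` set ps"
    moreover have "a \<le> k" using cv by (simp add: cov_def)
    ultimately obtain x where "x \<in> set (chain_vals (v \<circ> transpose a b) ps)" "(v \<circ> transpose a b) a \<le> x"
      using mono_val[OF kc] by blast
    then show False using so cv by (auto simp: cov_def)
  qed
  then show ?case using Cons.IH[OF kc so(2)] q by auto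
qed

lemma swap_step:
  assumes inj: "inj u" and c1: "cov n k u a b" and c2: "cov n k (u \<circ> transpose a b) c d"
    and ac: "a \<noteq> c" and lt: "u a < u c"
  shows "cov n k u c d \<and> cov n k (u \<circ> transpose c d) a b \<and> d \<noteq> b"
proof -
  have A: "1 \<le> a" "a \<le> k" "k < b" "b \<le> n" "u a < u b"
    and nA: "\<And>x. a < x \<Longrightarrow> x < b \<Longrightarrow> \<not> (u a < u x \<and> u x < u b)"
    using c1 by (auto simp: cov_def)
  have cn: "c \<noteq> b" using A c2 by (auto simp: cov_def)
  have B0: "1 \<le> c" "c \<le> k" "k < d" "d \<le> n" using c2 by (auto simp: cov_def)
  have uc: "(u \<circ> transpose a b) c = u c" using ac cn by auto
  have db: "d \<noteq> b"
  proof
    assume "d = b"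
    then have "(u \<circ> transpose a b) d = u a" by simp
    then show False using c2 uc lt by (auto simp: cov_def)
  qed
  have da: "d \<noteq> a" using A B0 by auto
  have ud: "(u \<circ> transpose a b) d = u d" using db da by auto
  have B: "u c < u d"
    and nB: "\<And>x. c < x \<Longrightarrow> x < d \<Longrightarrow> \<not> (u c < (u \<circ> transpose a b) x \<and> (u \<circ> transpose a b) x < u d)"
    using c2 uc ud by (auto simp: cov_def)
  have injne: "\<And>x y. x \<noteq> y \<Longrightarrow> u x \<noteq> u y" using inj by (meson inj_eq)
  have cgt: "u b < u c" if "a < c"
  proof -
    have "\<not> (u a < u c \<and> u c < u b)" using nA A B0 that by auto
    then show ?thesis using lt injne[OF cn] by linarith
  qed
  have nB': "\<not> (u c < u x \<and> u x < u d)" if "c < x" "x < d" "x \<noteq> a" "x \<noteq> b" for x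
    using nB[OF that(1,2)] that(3,4) by auto
  have nBa: "\<not> (u c < u b \<and> u b < u d)" if "c < a"
    using nB[of a] that A B0 by auto
  have g1: "cov n k u c d"
    unfolding cov_def
  proof (intro conjI allI impI)
    fix x assume x: "c < x \<and> x < d"
    show "\<not> (u c < u x \<and> u x < u d)"
    proof (cases "x = a")
      case True then show ?thesis using lt by auto
    next
      case xa: False
      show ?thesis
      proof (cases "x = b")
        case True
        show ?thesis
        proof (cases "c < a")
          case True then show ?thesis using nBa \<open>x = b\<close> by auto
        next
          case False
          then have "a < c" using ac by auto
          then show ?thesis using cgt \<open>x = b\<close> by auto
        qed
      next
        case False then show ?thesis using nB' x xa by auto
      qed
    qed
  qed (use B0 B in auto)
  have ta: "(u \<circ> transpose c d) a = u a" "(u \<circ> transpose c d) b = u b"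
    using ac da db cn A B0 by auto
  have g2: "cov n k (u \<circ> transpose c d) a b"
    unfolding cov_def ta
  proof (intro conjI allI impI)
    fix x assume x: "a < x \<and> x < b"
    show "\<not> (u a < (u \<circ> transpose c d) x \<and> (u \<circ> transpose c d) x < u b)"
    proof (cases "x = c")
      case True
      then have "u b < u c" using cgt x by auto
      then show ?thesis using True B by auto
    next
      case xc: False
      show ?thesis
      proof (cases "x = d")
        case True
        show ?thesis
        proof (cases "c < a")
          case True
          have "\<not> (u a < u d \<and> u d < u b)" using nA x \<open>x = d\<close> by auto
          then have "u b < u d" using lt B injne[OF db] by linarith
          then show ?thesis using nBa True \<open>x = d\<close> by auto
        next
          case False
          then have "a < c" using ac by auto
          then show ?thesis using cgt \<open>x = d\<close> by auto
        qed
      next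
        case False then show ?thesis using nA x xc by auto
      qed
    qed
  qed (use A in auto)
  show ?thesis using g1 g2 db by auto
qed


declare comp_apply[simp del]

lemma tcomm: "a \<noteq> c \<Longrightarrow> a \<noteq> d \<Longrightarrow> b \<noteq> c \<Longrightarrow> b \<noteq> d \<Longrightarrow>
   transpose a b \<circ> transpose c d = transpose c d \<circ> transpose a b"
  by (rule ext) (auto simp: transpose_def comp_apply)

lemma ins:
  assumes "kch n k (u \<circ> transpose a b) ps" "cov n k u a b" "inj u" "a \<notin> fst ` set ps"
    "sorted_wrt (>) (chain_vals (u \<circ> transpose a b) ps)"
  shows "\<exists>qs. kch n k u qs \<and> chain_end u qs = chain_end (u \<circ> transpose a b) ps \<and>
    sorted_wrt (>) (chain_vals u qs) \<and> fst ` set qs = insert a (fst ` set ps) \<and>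
    set (chain_vals u qs) = insert (u a) (set (chain_vals (u \<circ> transpose a b) ps))"
  using assms
proof (induction ps arbitrary: u a b)
  case Nil
  then show ?case by (intro exI[of _ "[(a, b)]"]) auto
next
  case (Cons q rest)
  obtain c d where q: "q = (c, d)" by force
  have c2: "cov n k (u \<circ> transpose a b) c d" and kr: "kch n k (u \<circ> transpose a b \<circ> transpose c d) rest"
    using Cons.prems q by auto
  have ac: "a \<noteq> c" and anr: "a \<notin> fst ` set rest" using Cons.prems q by auto
  have cb: "c \<noteq> b" "c \<le> k" "k < b" "a \<le> k" "k < d" using Cons.prems(2) c2 by (auto simp: cov_def)
  have uc: "(u \<circ> transpose a b) c = u c" using ac cb by (auto simp: comp_apply)
  have so: "\<forall>x\<in>set (chain_vals (u \<circ> transpose a b \<circ> transpose c d) rest). x < u c"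
    "sorted_wrt (>) (chain_vals (u \<circ> transpose a b \<circ> transpose c d) rest)"
    using Cons.prems(5) q uc by auto
  have "u a \<noteq> u c" using Cons.prems(3) ac by (meson inj_eq)
  then consider "u c < u a" | "u a < u c" by linarith
  then show ?case
  proof cases
    case 1
    show ?thesis
      by (rule exI[of _ "(a, b) # q # rest"]) (use Cons.prems 1 so uc q in auto)
  next
    case 2
    have sw: "cov n k u c d" "cov n k (u \<circ> transpose c d) a b" "d \<noteq> b"
      using swap_step[OF Cons.prems(3,2) c2 ac 2] by auto
    have da: "d \<noteq> a" using cb by auto
    have comm: "u \<circ> transpose c d \<circ> transpose a b = u \<circ> transpose a b \<circ> transpose c d"
      using tcomm[of a c d b] ac da cb sw(3) by (simp add: comp_assoc)
    have inj2: "inj (u \<circ> transpose c d)" using Cons.prems(3) by (simp add: inj_compose inj_transpose)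
    obtain qs where qs: "kch n k (u \<circ> transpose c d) qs"
      "chain_end (u \<circ> transpose c d) qs = chain_end (u \<circ> transpose a b \<circ> transpose c d) rest"
      "sorted_wrt (>) (chain_vals (u \<circ> transpose c d) qs)"
      "fst ` set qs = insert a (fst ` set rest)"
      "set (chain_vals (u \<circ> transpose c d) qs) = insert ((u \<circ> transpose c d) a) (set (chain_vals (u \<circ> transpose a b \<circ> transpose c d) rest))"
      using Cons.IH[of "u \<circ> transpose c d" a b] kr sw(2) inj2 anr so(2) comm by auto
    have ua: "(u \<circ> transpose c d) a = u a" using ac da by (auto simp: comp_apply)
    show ?thesis
    proof (rule exI[of _ "(c, d) # qs"], intro conjI)
      show "kch n k u ((c, d) # qs)" using sw qs by simp
      show "chain_end u ((c, d) # qs) = chain_end (u \<circ> transpose a b) (q # rest)"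
        using qs q by simp
      show "sorted_wrt (>) (chain_vals u ((c, d) # qs))"
        using qs(3,5) ua so(1) 2 by auto
      show "fst ` set ((c, d) # qs) = insert a (fst ` set (q # rest))"
        using qs(4) q by auto
      show "set (chain_vals u ((c, d) # qs)) = insert (u a) (set (chain_vals (u \<circ> transpose a b) (q # rest)))"
        using qs(5) ua q uc by auto
    qed
  qed
qed

lemma sort_chain:
  assumes "kch n k u ps" "inj u" "distinct (map fst ps)"
  shows "\<exists>qs. kch n k u qs \<and> chain_end u qs = chain_end u ps \<and>
    sorted_wrt (>) (chain_vals u qs) \<and> fst ` set qs = fst ` set ps"
  using assms
proof (induction ps arbitrary: u)
  case Nil then show ?case by (intro exI[of _ "[]"]) auto
next
  case (Cons p ps)
  obtain a b where p: "p = (a, b)" by force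
  have inj2: "inj (u \<circ> transpose a b)" using Cons.prems(2) by (simp add: inj_compose inj_transpose)
  obtain qs where qs: "kch n k (u \<circ> transpose a b) qs" "chain_end (u \<circ> transpose a b) qs = chain_end (u \<circ> transpose a b) ps"
    "sorted_wrt (>) (chain_vals (u \<circ> transpose a b) qs)" "fst ` set qs = fst ` set ps"
    using Cons.IH[OF _ inj2] Cons.prems p by auto
  have "a \<notin> fst ` set qs" using qs(4) Cons.prems(3) p by auto
  then obtain rs where "kch n k u rs \<and> chain_end u rs = chain_end (u \<circ> transpose a b) qs \<and>
    sorted_wrt (>) (chain_vals u rs) \<and> fst ` set rs = insert a (fst ` set qs)"
    using ins[OF qs(1) _ Cons.prems(2) _ qs(3)] Cons.prems(1) p by auto
  then show ?case using qs p by (intro exI[of _ rs]) auto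
qed

theorem lemma2p31:
  fixes n k :: nat and u w :: "nat \<Rightarrow> nat"
  assumes "1 \<le> n" and "1 \<le> k" and "k \<le> n - 1"
    and "u permutes {1..n}" and "w permutes {1..n}"
  shows "lower_arrow n k u w \<longleftrightarrow> upper_arrow n (n - k) (w \<circ> w0 n) (u \<circ> w0 n)"
proof -
  have iu: "inj u" and iw: "inj w" using assms(4,5) permutes_inj by auto
  have iuw: "inj (u \<circ> w0 n)" and iww: "inj (w \<circ> w0 n)" using iu iw inj_w0 by (auto intro: inj_compose)
  have kn: "k \<le> n" using assms by auto
  have cancel: "f \<circ> w0 n \<circ> w0 n = f" for f :: "nat \<Rightarrow> nat" by (simp add: comp_assoc w0w0)
  show ?thesis
  proof
    assume "lower_arrow n k u w"
    then obtain ps where ps: "kchain n k u ps" "chain_end u ps = w" "distinct (map fst ps)"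
      by (auto simp: lower_arrow_def)
    then have kp: "kch n k u ps" using kchain_iff[OF iu] by simp
    obtain qs where qs: "kch n k u qs" "chain_end u qs = w" "sorted_wrt (>) (chain_vals u qs)"
      using sort_chain[OF kp iu ps(3)] ps(2) by auto
    from rev_chain[OF qs(1) kn] qs(2)
    have r: "kch n (n - k) (w \<circ> w0 n) (rev (map (fl n) qs))"
      "chain_end (w \<circ> w0 n) (rev (map (fl n) qs)) = u \<circ> w0 n"
      "chain_vals (w \<circ> w0 n) (rev (map (fl n) qs)) = rev (chain_vals u qs)" by auto
    show "upper_arrow n (n - k) (w \<circ> w0 n) (u \<circ> w0 n)"
      unfolding upper_arrow_def
      using r qs(3) kchain_iff[OF iww] by (intro exI[of _ "rev (map (fl n) qs)"]) (auto simp: sorted_wrt_rev)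
  next
    assume "upper_arrow n (n - k) (w \<circ> w0 n) (u \<circ> w0 n)"
    then obtain ps where ps: "kchain n (n - k) (w \<circ> w0 n) ps" "chain_end (w \<circ> w0 n) ps = u \<circ> w0 n"
      "sorted_wrt (<) (chain_vals (w \<circ> w0 n) ps)"
      by (auto simp: upper_arrow_def)
    then have k1: "kch n (n - k) (w \<circ> w0 n) ps" using kchain_iff[OF iww] by simp
    have nk: "n - (n - k) = k" using kn by simp
    from rev_chain[OF k1] ps(2)
    have r: "kch n k u (rev (map (fl n) ps))"
      "chain_end u (rev (map (fl n) ps)) = w"
      "chain_vals u (rev (map (fl n) ps)) = rev (chain_vals (w \<circ> w0 n) ps)"
      by (auto simp: nk cancel)
    have "sorted_wrt (>) (chain_vals u (rev (map (fl n) ps)))"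
      using r(3) ps(3) by (simp add: sorted_wrt_rev)
    then have "distinct (map fst (rev (map (fl n) ps)))" using dec_distinct[OF r(1)] by blast
    then show "lower_arrow n k u w"
      unfolding lower_arrow_def using r kchain_iff[OF iu] by blast
  qed
qed

end
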